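(* If exactly one agent $i$ cuts one or more links due to confirmation bias (so that $T^*$ differs from $T$ only in row $i$, with $T^*_{ij}=0<T_{ij}$ for at least one $j\neq i$), then agent $i$'s influence strictly increases: $s^*_i>s_i$.
   Context: Agents $N=\{1,\dots,n\}$ communicate through a network $T$, an $n\times n$ row-stochastic matrix with entries $T_{ij}\in[0,1]$, assumed strongly connected and aperiodic. Each agent has an initial belief $x_{i0}\in[0,1]$. Confirmation bias of strength $q\in[0,1]$ produces $T^*$: for $j\ne i$, if $|x_{i0}-x_{j0}|>1-q$ then $T^*_{ij}=0$ and $T_{ij}$ is added to the self-link $T^*_{ii}$; otherwise $T^*_{ij}=T_{ij}$. $T^*$ is assumed strongly connected. The influence vector $s$ of a network $P$ is the left eigenvector for eigenvalue $1$ normalized to sum to $1$ ($s=sP$); $s,s^*$ are the influence vectors of $T,T^*$. *)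

theory Defs
  imports Complex_Main
begin

definition row_stochastic :: "('n::finite \<Rightarrow> 'n \<Rightarrow> real) \<Rightarrow> bool" where
  "row_stochastic P \<longleftrightarrow> (\<forall>i j. 0 \<le> P i j \<and> P i j \<le> 1) \<and> (\<forall>i. (\<Sum>j\<in>UNIV. P i j) = 1)"

definition link_rel :: "('n \<Rightarrow> 'n \<Rightarrow> real) \<Rightarrow> ('n \<times> 'n) set" where
  "link_rel P = {(i, j). P i j > 0}"

definition strongly_connected :: "('n \<Rightarrow> 'n \<Rightarrow> real) \<Rightarrow> bool" where
  "strongly_connected P \<longleftrightarrow> (\<forall>i j. (i, j) \<in> (link_rel P)\<^sup>+)"

definition aperiodic :: "('n \<Rightarrow> 'n \<Rightarrow> real) \<Rightarrow> bool" where
  "aperiodic P \<longleftrightarrow> (\<forall>i. Gcd {k::nat. 0 < k \<and> (i, i) \<in> (link_rel P) ^^ k} = 1)"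

definition cut :: "('n \<Rightarrow> real) \<Rightarrow> real \<Rightarrow> 'n \<Rightarrow> 'n \<Rightarrow> bool" where
  "cut x0 q i j \<longleftrightarrow> j \<noteq> i \<and> \<bar>x0 i - x0 j\<bar> > 1 - q"

definition conf_bias :: "('n::finite \<Rightarrow> 'n \<Rightarrow> real) \<Rightarrow> ('n \<Rightarrow> real) \<Rightarrow> real \<Rightarrow> 'n \<Rightarrow> 'n \<Rightarrow> real" where
  "conf_bias T x0 q i j =
     (if j = i then T i i + (\<Sum>k\<in>{k. cut x0 q i k}. T i k)
      else if cut x0 q i j then 0 else T i j)"

definition influence_vector :: "('n::finite \<Rightarrow> 'n \<Rightarrow> real) \<Rightarrow> ('n \<Rightarrow> real) \<Rightarrow> bool" where
  "influence_vector P s \<longleftrightarrow> (\<forall>j. (\<Sum>k\<in>UNIV. s k * P k j) = s j) \<and> (\<Sum>k\<in>UNIV. s k) = 1"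

end

theory Submission
  imports Defs "HOL-Analysis.Analysis"
begin

lemma trancl_closed:
  assumes "(a,b) \<in> R\<^sup>+" "a \<in> A" "\<And>u v. (u,v) \<in> R \<Longrightarrow> u \<in> A \<Longrightarrow> v \<in> A"
  shows "b \<in> A"
  using assms(1,2) by (induction rule: trancl_induct) (auto intro: assms(3))

lemma max_principle:
  fixes T :: "'n::finite \<Rightarrow> 'n \<Rightarrow> real" and x :: "'n \<Rightarrow> real"
  assumes rs: "row_stochastic T" and sc: "strongly_connected T"
    and xi: "x i = 0" and fx: "\<forall>j. j \<noteq> i \<longrightarrow> x j = (\<Sum>k\<in>UNIV. T j k * x k)"
  shows "x j \<le> 0"
proof (rule ccontr)
  assume "\<not> x j \<le> 0"
  define M where "M = Max (range x)"
  have Mge: "x k \<le> M" for k unfolding M_def by (simp add: Max_ge)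
  have "M \<in> range x" unfolding M_def by (rule Max_in) auto
  then obtain j0 where j0: "x j0 = M" by auto
  have Mpos: "M > 0" using Mge[of j] \<open>\<not> x j \<le> 0\<close> by linarith
  have closed: "x v = M" if "(u,v) \<in> link_rel T" "x u = M" for u v
  proof -
    have Tuv: "T u v > 0" using that(1) by (simp add: link_rel_def)
    have ui: "u \<noteq> i" using that(2) Mpos xi by auto
    have nn: "\<forall>k. 0 \<le> T u k" and s1: "(\<Sum>k\<in>UNIV. T u k) = 1" using rs by (auto simp: row_stochastic_def)
    have "(\<Sum>k\<in>UNIV. T u k * (M - x k)) = (\<Sum>k\<in>UNIV. T u k) * M - (\<Sum>k\<in>UNIV. T u k * x k)"
      by (simp add: right_diff_distrib sum_subtractf sum_distrib_right)
    also have "\<dots> = 0" using s1 fx ui that(2) by simp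
    finally have z: "(\<Sum>k\<in>UNIV. T u k * (M - x k)) = 0" .
    have nn2: "\<forall>k\<in>UNIV. 0 \<le> T u k * (M - x k)" using nn Mge by (simp add: mult_nonneg_nonneg)
    have "\<forall>k\<in>UNIV. T u k * (M - x k) = 0"
      using sum_nonneg_eq_0_iff[of UNIV "\<lambda>k. T u k * (M - x k)"] nn2 z by simp
    then have "T u v * (M - x v) = 0" by auto
    then show ?thesis using Tuv by simp
  qed
  have "(j0, i) \<in> (link_rel T)\<^sup>+" using sc by (simp add: strongly_connected_def)
  then have "i \<in> {k. x k = M}" by (rule trancl_closed) (use j0 closed in auto)
  then show False using xi Mpos by simp
qed

lemma hitting:
  fixes T :: "'n::finite \<Rightarrow> 'n \<Rightarrow> real"
  assumes rs: "row_stochastic T" and sc: "strongly_connected T"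
  obtains h :: "'n \<Rightarrow> real" where "h i = 0" "\<forall>j. j \<noteq> i \<longrightarrow> h j = 1 + (\<Sum>k\<in>UNIV. T j k * h k)"
    "\<forall>j. 0 \<le> h j"
proof -
  define A :: "real^'n^'n" where
    "A = (\<chi> j k. if j = i then (if k = i then 1 else 0) else (if k = j then 1 else 0) - T j k)"
  have Av: "(A *v x) $ j = (if j = i then x $ i else x $ j - (\<Sum>k\<in>UNIV. T j k * x $ k))" for x j
  proof (cases "j = i")
    case True
    have d: "(if k = i then 1 else 0) * (y::real) = (if k = i then y else 0)" for k y by simp
    show ?thesis using True by (simp add: A_def matrix_vector_mult_def d)
  next
    case False
    have d: "((if k = j then 1 else 0) - T j k) * (y::real) = (if k = j then y else 0) - T j k * y" for k y
      by (simp add: left_diff_distrib)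
    show ?thesis using False by (simp add: A_def matrix_vector_mult_def d sum_subtractf)
  qed
  have inj: "inj ((*v) A)"
  proof (subst linear_injective_0)
    show "linear ((*v) A)" by (rule matrix_vector_mul_linear)
    show "\<forall>x. A *v x = 0 \<longrightarrow> x = 0"
    proof (intro allI impI)
      fix x :: "real^'n" assume h0: "A *v x = 0"
      have xi: "x $ i = 0" using arg_cong[OF h0, of "\<lambda>v. v $ i"] by (simp add: Av)
      have fx: "\<forall>j. j \<noteq> i \<longrightarrow> x $ j = (\<Sum>k\<in>UNIV. T j k * x $ k)"
      proof (intro allI impI)
        fix j assume "j \<noteq> i"
        then show "x $ j = (\<Sum>k\<in>UNIV. T j k * x $ k)"
          using arg_cong[OF h0, of "\<lambda>v. v $ j"] by (simp add: Av)
      qed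
      have le: "x $ j \<le> 0" for j by (rule max_principle[OF rs sc, of "\<lambda>k. x $ k"]) (use xi fx in auto)
      have ge: "- x $ j \<le> 0" for j
        by (rule max_principle[OF rs sc, of "\<lambda>k. - x $ k" i]) (use xi fx in \<open>auto simp: sum_negf\<close>)
      show "x = 0" using le ge by (simp add: vec_eq_iff) (meson antisym neg_le_0_iff_le)
    qed
  qed
  have "surj ((*v) A)" using linear_injective_imp_surjective[OF matrix_vector_mul_linear inj] by simp
  then obtain x where hx: "A *v x = (\<chi> j. if j = i then 0 else 1)" by (metis surjE)
  define h where "h k = x $ k" for k
  have hi: "h i = 0" using arg_cong[OF hx, of "\<lambda>v. v $ i"] by (simp add: Av h_def)
  have hj: "\<forall>j. j \<noteq> i \<longrightarrow> h j = 1 + (\<Sum>k\<in>UNIV. T j k * h k)"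
  proof (intro allI impI)
    fix j assume "j \<noteq> i"
    then show "h j = 1 + (\<Sum>k\<in>UNIV. T j k * h k)"
      using arg_cong[OF hx, of "\<lambda>v. v $ j"] by (simp add: Av h_def)
  qed
  have hnn: "\<forall>j. 0 \<le> h j"
  proof (rule ccontr)
    assume "\<not> (\<forall>j. 0 \<le> h j)"
    then obtain j1 where "h j1 < 0" by (auto simp: not_le)
    define m where "m = Min (range h)"
    have mle: "m \<le> h k" for k unfolding m_def by (simp add: Min_le)
    have "m \<in> range h" unfolding m_def by (rule Min_in) auto
    then obtain j where j: "h j = m" by auto
    have mneg: "m < 0" using mle[of j1] \<open>h j1 < 0\<close> by linarith
    have ji: "j \<noteq> i" using j mneg hi by auto
    have nn: "\<forall>k. 0 \<le> T j k" and s1: "(\<Sum>k\<in>UNIV. T j k) = 1" using rs by (auto simp: row_stochastic_def)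
    have "(\<Sum>k\<in>UNIV. T j k * m) \<le> (\<Sum>k\<in>UNIV. T j k * h k)"
      by (rule sum_mono) (simp add: mult_left_mono nn mle)
    moreover have "(\<Sum>k\<in>UNIV. T j k * m) = m" using s1 by (simp add: sum_distrib_right[symmetric])
    ultimately have "h j \<ge> 1 + m" using hj ji by auto
    then show False using j by simp
  qed
  show ?thesis using that hi hj hnn by blast
qed

lemma influence_formula:
  fixes T P :: "'n::finite \<Rightarrow> 'n \<Rightarrow> real"
  assumes rows: "\<forall>k j. k \<noteq> i \<longrightarrow> P k j = T k j"
    and iv: "influence_vector P s"
    and hi: "h i = 0" and hj: "\<forall>j. j \<noteq> i \<longrightarrow> h j = 1 + (\<Sum>k\<in>UNIV. T j k * h k)"
  shows "s i * (1 + (\<Sum>j\<in>UNIV. P i j * h j)) = 1"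
proof -
  have st: "\<And>j. (\<Sum>k\<in>UNIV. s k * P k j) = s j" and s1: "(\<Sum>k\<in>UNIV. s k) = 1"
    using iv by (auto simp: influence_vector_def)
  define g where "g k = (\<Sum>j\<in>UNIV. P k j * h j)" for k
  have gk: "g k = h k - 1" if "k \<noteq> i" for k using hj rows that by (simp add: g_def)
  have sp: "\<And>f::'n \<Rightarrow> real. sum f UNIV = f i + sum f (UNIV - {i})"
    by (rule sum.remove) auto
  have "(\<Sum>j\<in>UNIV. s j * h j) = (\<Sum>j\<in>UNIV. (\<Sum>k\<in>UNIV. s k * P k j) * h j)" by (simp add: st)
  also have "\<dots> = (\<Sum>j\<in>UNIV. \<Sum>k\<in>UNIV. s k * P k j * h j)" by (simp add: sum_distrib_right)
  also have "\<dots> = (\<Sum>k\<in>UNIV. \<Sum>j\<in>UNIV. s k * P k j * h j)" by (rule sum.swap)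
  also have "\<dots> = (\<Sum>k\<in>UNIV. s k * g k)" by (simp add: g_def sum_distrib_left mult.assoc)
  also have "\<dots> = s i * g i + (\<Sum>k\<in>UNIV - {i}. s k * g k)"
    by (rule sp)
  also have "(\<Sum>k\<in>UNIV - {i}. s k * g k) = (\<Sum>k\<in>UNIV - {i}. s k * h k - s k)"
    by (rule sum.cong) (auto simp: gk right_diff_distrib)
  also have "\<dots> = (\<Sum>k\<in>UNIV - {i}. s k * h k) - (\<Sum>k\<in>UNIV - {i}. s k)"
    by (rule sum_subtractf)
  also have "(\<Sum>k\<in>UNIV - {i}. s k * h k) = (\<Sum>k\<in>UNIV. s k * h k)"
    using hi sp[of "\<lambda>k. s k * h k"] by simp
  also have "(\<Sum>k\<in>UNIV - {i}. s k) = 1 - s i"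
    using s1 sp[of s] by simp
  finally have "0 = s i * g i - (1 - s i)" by simp
  then show ?thesis by (simp add: g_def algebra_simps)
qed


theorem mainTheorem3:
  fixes T :: "'n::finite \<Rightarrow> 'n \<Rightarrow> real"
    and x0 :: "'n \<Rightarrow> real" and q :: real and i :: 'n
    and s s' :: "'n \<Rightarrow> real"
  assumes "row_stochastic T" "strongly_connected T" "aperiodic T"
    and "\<forall>k. 0 \<le> x0 k \<and> x0 k \<le> 1"
    and "0 \<le> q" "q \<le> 1"
    and "strongly_connected (conf_bias T x0 q)"
    and "\<forall>k j. k \<noteq> i \<longrightarrow> conf_bias T x0 q k j = T k j"
    and "\<exists>j. j \<noteq> i \<and> conf_bias T x0 q i j = 0 \<and> 0 < T i j"
    and "influence_vector T s"
    and "influence_vector (conf_bias T x0 q) s'"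
  shows "s' i > s i"
proof -
  note rs = assms(1)
  obtain h :: "'n \<Rightarrow> real" where hi: "h i = 0"
    and hj: "\<forall>j. j \<noteq> i \<longrightarrow> h j = 1 + (\<Sum>k\<in>UNIV. T j k * h k)" and hnn: "\<forall>j. 0 \<le> h j"
    using hitting[OF assms(1,2)] by blast
  define P where "P = conf_bias T x0 q"
  define a where "a = (\<Sum>j\<in>UNIV. T i j * h j)"
  define a' where "a' = (\<Sum>j\<in>UNIV. P i j * h j)"
  have e1: "s i * (1 + a) = 1" unfolding a_def
    by (rule influence_formula[of i T T]) (use assms(10) hi hj in auto)
  have e2: "s' i * (1 + a') = 1" unfolding a'_def P_def
    by (rule influence_formula[of i _ T]) (use assms(8,11) hi hj in auto)
  have Tnn: "\<forall>k j. 0 \<le> T k j" using rs by (auto simp: row_stochastic_def)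
  have Pnn: "0 \<le> P i j * h j" for j
  proof (cases "j = i")
    case True then show ?thesis using hi by simp
  next
    case False then show ?thesis using Tnn hnn by (auto simp: P_def conf_bias_def)
  qed
  have a'nn: "0 \<le> a'" unfolding a'_def by (rule sum_nonneg) (use Pnn in auto)
  obtain j0 where j0: "j0 \<noteq> i" "P i j0 = 0" "0 < T i j0" using assms(9) P_def by auto
  have hj0: "h j0 \<ge> 1"
  proof -
    have "0 \<le> (\<Sum>k\<in>UNIV. T j0 k * h k)" by (rule sum_nonneg) (use Tnn hnn in auto)
    then show ?thesis using hj j0(1) by auto
  qed
  have "a' < a" unfolding a_def a'_def
  proof (rule sum_strict_mono_ex1)
    show "finite (UNIV :: 'n set)" by simp
    show "\<forall>x\<in>UNIV. P i x * h x \<le> T i x * h x"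
    proof
      fix x :: 'n
      show "P i x * h x \<le> T i x * h x"
      proof (cases "x = i")
        case True then show ?thesis using hi by simp
      next
        case False then show ?thesis using Tnn hnn by (auto simp: P_def conf_bias_def)
      qed
    qed
    show "\<exists>x\<in>UNIV. P i x * h x < T i x * h x"
      using j0 hj0 by (intro bexI[of _ j0]) auto
  qed
  have si: "s i = 1 / (1 + a)" using e1 a'nn \<open>a' < a\<close> by (simp add: field_simps)
  have si': "s' i = 1 / (1 + a')" using e2 a'nn by (simp add: field_simps)
  show ?thesis unfolding si si' using a'nn \<open>a' < a\<close> by (simp add: frac_less2)
qed

end
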